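(* Assume the network is regular. Define a relation $\approx$ on $\mathcal E$ by $j_1\approx j_2$ iff $j_1=j_2$, or ($j_1\leadsto j_2$ and $j_2\leadsto j_1$). Then: (a) $\approx$ is an equivalence relation on $\mathcal E$. (b) If $\varphi$ is an equivalence class with at least two elements, then $j\leadsto j'$ for all $j,j'\in\varphi$ (including $j=j'$). (c) If $j_1\leadsto j_2$ and $j_1\not\approx j_2$, then for all $j_1'\approx j_1$ and $j_2'\approx j_2$ one has $j_1'\leadsto j_2'$ and $j_2'\not\leadsto j_1'$. Consequently, the relation on equivalence classes "$\varphi\prec\varphi'$ iff $\varphi\neq\varphi'$ and some element of $\varphi$ influences some element of $\varphi'$" is a strict partial order, and for $j^*\in\varphi^*$, $j'\ne j^*$: $j^*\leadsto j'$ iff $j'\in\varphi^*$ or $\varphi^*\prec\varphi'$, where $\varphi'$ is the class of $j'$. (d) For $j\in\mathcal E$ let $I_{\mathcal M}(j)=\{m\in\mathcal M: j\leadsto m\}$. If $j_1\leadsto j_2$ then $I_{\mathcal M}(j_1)\supseteq I_{\mathcal M}(j_2)$; if $j_1\approx j_2$ then $I_{\mathcal M}(j_1)=I_{\mathcal M}(j_2)$. (e) For $j^*\in\mathcal E$ with class $\varphi^*$, let $\mathcal M^{\neg d}(j^* )=\{m'\in\mathcal M:\ j^*\leadsto j'\leadsto m' \text{ for some } j'\notin\varphi^*\}$ and $\mathcal M^d(j^* )=I_{\mathcal M}(j^* )\setminus\mathcal M^{\neg d}(j^* )$. Then $\mathcal M^{\neg d}(j^* )\subseteq I_{\mathcal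 M}(j^* )$, and $j^*\leadsto m'$ iff either $m'\in\mathcal M^d(j^* )$, or $m'\in\mathcal M^d(j')$ for some $j'\notin\varphi^*$ with $j^*\leadsto j'$; i.e. $I_{\mathcal M}(j^* )=\mathcal M^d(j^* )\cup\bigcup_{j^*\leadsto j'\notin\varphi^*}\mathcal M^d(j')$.
   Context: A reaction network consists of a finite set of metabolites $\mathcal M=\{1,\dots,M\}$ and a finite set of reactions $\mathcal E=\{1,\dots,E\}$. Each reaction $j$ has an input stoichiometric vector $y^j\in\mathbb R_{\ge0}^M$ and an output stoichiometric vector $\bar y^j\in\mathbb R_{\ge0}^M$. Write $m\vdash j$ iff $y^j_m\neq 0$. The stoichiometric matrix $S$ is the real $M\times E$ matrix whose $j$-th column is $S^j=\bar y^j-y^j$; it is assumed to have full rank $M$. The rate matrix $R=(r_{jm})$ is the $E\times M$ matrix whose entries $r_{jm}$ with $m\vdash j$ are independent indeterminates, and $r_{jm}=0$ whenever $m\not\vdash j$. "Nonzero algebraically" means nonzero as a polynomial/rational function in these indeterminates. The network is regular if $\det(SR)\ne0$ algebraically. Let $B=\begin{pmatrix}-\mathrm{id}_{\mathcal E}&R\\ S&0\end{pmatrix}$, a square matrix with rows and columns indexed by the disjoint union $\mathcal E\sqcup\mathcal M$; for a regular network it is invertible over the field of rational functions in the $r_{jm}$. For $\alpha\in\mathcal E\sqcup\mathcal M$ set $z^\alpha=-B^{-1}e_\alpha$, and write $\alpha\leadsto\beta$ for $\beta\in\mathcal E\sqcup\mathcal M$ if $z^\alpha_\beta$ is nonzero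 algebraically. *)

theory Defs
  imports "HOL-Analysis.Analysis"
begin

text \<open>Reaction network: metabolites are the finite type 'm, reactions the finite type 'e.
  The input and output stoichiometric vectors are y j and ybar j (functions 'm \<Rightarrow> real).
  m \<turnstile> j iff y j m \<noteq> 0.\<close>

definition stoich :: "('e::finite \<Rightarrow> 'm::finite \<Rightarrow> real) \<Rightarrow> ('e \<Rightarrow> 'm \<Rightarrow> real) \<Rightarrow> real^'e^'m" where
  "stoich y ybar = (\<chi> m j. ybar j m - y j m)"

text \<open>Rate matrix evaluated at a point r of the indeterminates r_jm (only entries with m \<turnstile> j are used).\<close>
definition rate_matrix :: "('e::finite \<Rightarrow> 'm::finite \<Rightarrow> real) \<Rightarrow> ('e \<Rightarrow> 'm \<Rightarrow> real) \<Rightarrow> real^'m^'e" where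
  "rate_matrix y r = (\<chi> j m. if y j m \<noteq> 0 then r j m else 0)"

text \<open>Regularity: det(SR) is a nonzero polynomial in the indeterminates, i.e. it does not vanish
  at some real evaluation point.\<close>
definition regular :: "('e::finite \<Rightarrow> 'm::finite \<Rightarrow> real) \<Rightarrow> ('e \<Rightarrow> 'm \<Rightarrow> real) \<Rightarrow> bool" where
  "regular y ybar \<longleftrightarrow> (\<exists>r. det (stoich y ybar ** rate_matrix y r) \<noteq> 0)"

definition Bmat :: "('e::finite \<Rightarrow> 'm::finite \<Rightarrow> real) \<Rightarrow> ('e \<Rightarrow> 'm \<Rightarrow> real) \<Rightarrow> ('e \<Rightarrow> 'm \<Rightarrow> real)
    \<Rightarrow> real^('e + 'm)^('e + 'm)" where
  "Bmat y ybar r = (\<chi> a b. case (a, b) of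
       (Inl j, Inl j') \<Rightarrow> (if j = j' then -1 else 0)
     | (Inl j, Inr m) \<Rightarrow> rate_matrix y r $ j $ m
     | (Inr m, Inl j) \<Rightarrow> stoich y ybar $ m $ j
     | (Inr m, Inr m') \<Rightarrow> 0)"

definition zvec :: "('e::finite \<Rightarrow> 'm::finite \<Rightarrow> real) \<Rightarrow> ('e \<Rightarrow> 'm \<Rightarrow> real) \<Rightarrow> ('e \<Rightarrow> 'm \<Rightarrow> real)
    \<Rightarrow> 'e + 'm \<Rightarrow> real^('e + 'm)" where
  "zvec y ybar r \<alpha> = - (matrix_inv (Bmat y ybar r) *v axis \<alpha> 1)"

text \<open>alpha influences beta: z^alpha_beta is a nonzero rational function of the r_jm,
  i.e. it is nonzero at some real point where B (equivalently SR) is invertible.\<close>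
definition influences :: "('e::finite \<Rightarrow> 'm::finite \<Rightarrow> real) \<Rightarrow> ('e \<Rightarrow> 'm \<Rightarrow> real)
    \<Rightarrow> 'e + 'm \<Rightarrow> 'e + 'm \<Rightarrow> bool" where
  "influences y ybar \<alpha> \<beta> \<longleftrightarrow>
     (\<exists>r. det (stoich y ybar ** rate_matrix y r) \<noteq> 0 \<and> zvec y ybar r \<alpha> $ \<beta> \<noteq> 0)"

definition rxn_equiv :: "('e::finite \<Rightarrow> 'm::finite \<Rightarrow> real) \<Rightarrow> ('e \<Rightarrow> 'm \<Rightarrow> real) \<Rightarrow> 'e \<Rightarrow> 'e \<Rightarrow> bool" where
  "rxn_equiv y ybar j1 j2 \<longleftrightarrow> j1 = j2 \<or>
     (influences y ybar (Inl j1) (Inl j2) \<and> influences y ybar (Inl j2) (Inl j1))"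

definition rxn_class :: "('e::finite \<Rightarrow> 'm::finite \<Rightarrow> real) \<Rightarrow> ('e \<Rightarrow> 'm \<Rightarrow> real) \<Rightarrow> 'e \<Rightarrow> 'e set" where
  "rxn_class y ybar j = {j'. rxn_equiv y ybar j j'}"

definition rxn_classes :: "('e::finite \<Rightarrow> 'm::finite \<Rightarrow> real) \<Rightarrow> ('e \<Rightarrow> 'm \<Rightarrow> real) \<Rightarrow> 'e set set" where
  "rxn_classes y ybar = UNIV // {(j1, j2). rxn_equiv y ybar j1 j2}"

definition class_prec :: "('e::finite \<Rightarrow> 'm::finite \<Rightarrow> real) \<Rightarrow> ('e \<Rightarrow> 'm \<Rightarrow> real) \<Rightarrow> 'e set \<Rightarrow> 'e set \<Rightarrow> bool" where
  "class_prec y ybar \<phi> \<phi>' \<longleftrightarrow> \<phi> \<noteq> \<phi>' \<and> (\<exists>j\<in>\<phi>. \<exists>j'\<in>\<phi>'. influences y ybar (Inl j) (Inl j'))"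

definition IM :: "('e::finite \<Rightarrow> 'm::finite \<Rightarrow> real) \<Rightarrow> ('e \<Rightarrow> 'm \<Rightarrow> real) \<Rightarrow> 'e \<Rightarrow> 'm set" where
  "IM y ybar j = {m. influences y ybar (Inl j) (Inr m)}"

definition M_nd :: "('e::finite \<Rightarrow> 'm::finite \<Rightarrow> real) \<Rightarrow> ('e \<Rightarrow> 'm \<Rightarrow> real) \<Rightarrow> 'e \<Rightarrow> 'm set" where
  "M_nd y ybar js = {m'. \<exists>j'. j' \<notin> rxn_class y ybar js \<and>
      influences y ybar (Inl js) (Inl j') \<and> influences y ybar (Inl j') (Inr m')}"

definition M_d :: "('e::finite \<Rightarrow> 'm::finite \<Rightarrow> real) \<Rightarrow> ('e \<Rightarrow> 'm \<Rightarrow> real) \<Rightarrow> 'e \<Rightarrow> 'm set" where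
  "M_d y ybar js = IM y ybar js - M_nd y ybar js"

end

theory Submission
  imports Defs "HOL-Computational_Algebra.Polynomial"
begin


definition PF :: "(real \<Rightarrow> real) \<Rightarrow> bool" where
  "PF f \<longleftrightarrow> (\<exists>p. \<forall>t. f t = poly p t)"

lemma PF_const: "PF (\<lambda>t. c)"
  unfolding PF_def by (rule exI[of _ "[:c:]"]) simp

lemma PF_id: "PF (\<lambda>t. t)"
  unfolding PF_def by (rule exI[of _ "[:0,1:]"]) simp

lemma PF_add: "PF f \<Longrightarrow> PF g \<Longrightarrow> PF (\<lambda>t. f t + g t)"
  unfolding PF_def by (metis poly_add)

lemma PF_mult: "PF f \<Longrightarrow> PF g \<Longrightarrow> PF (\<lambda>t. f t * g t)"
  unfolding PF_def by (metis poly_mult)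

lemma PF_sum:
  assumes "\<And>i. i \<in> S \<Longrightarrow> PF (f i)"
  shows "PF (\<lambda>t. \<Sum>i\<in>S. f i t)"
proof -
  from assms have "\<forall>i\<in>S. \<exists>p. \<forall>t. f i t = poly p t" unfolding PF_def by blast
  then obtain P where P: "\<forall>i\<in>S. \<forall>t. f i t = poly (P i) t" by metis
  show ?thesis unfolding PF_def
    by (rule exI[of _ "\<Sum>i\<in>S. P i"]) (simp add: poly_sum P)
qed

lemma PF_prod:
  assumes "\<And>i. i \<in> S \<Longrightarrow> PF (f i)"
  shows "PF (\<lambda>t. \<Prod>i\<in>S. f i t)"
proof -
  from assms have "\<forall>i\<in>S. \<exists>p. \<forall>t. f i t = poly p t" unfolding PF_def by blast
  then obtain P where P: "\<forall>i\<in>S. \<forall>t. f i t = poly (P i) t" by metis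
  show ?thesis unfolding PF_def
    by (rule exI[of _ "\<Prod>i\<in>S. P i"]) (simp add: poly_prod P)
qed

lemma PF_det:
  fixes A :: "real \<Rightarrow> real^'n^'n"
  assumes "\<And>i j. PF (\<lambda>t. A t $ i $ j)"
  shows "PF (\<lambda>t. det (A t))"
  unfolding det_def
  by (intro PF_sum PF_mult PF_const PF_prod assms)

lemma Bmat_Inl:
  "(Bmat y ybar r *v v) $ Inl j = - v $ Inl j + (\<Sum>m\<in>UNIV. rate_matrix y r $ j $ m * v $ Inr m)"
proof -
  have "(Bmat y ybar r *v v) $ Inl j = (\<Sum>j'\<in>UNIV. (if j = j' then -1 else 0) * v $ Inl j')
      + (\<Sum>m\<in>UNIV. rate_matrix y r $ j $ m * v $ Inr m)"
    unfolding matrix_vector_mult_def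
    by (simp add: UNIV_Plus_UNIV[symmetric] sum.Plus Bmat_def del: UNIV_Plus_UNIV)
  also have "(\<Sum>j'\<in>UNIV. (if j = j' then -1 else 0) * v $ Inl j') = (\<Sum>j'\<in>UNIV. if j = j' then - v $ Inl j' else 0)"
    by (rule sum.cong) auto
  also have "\<dots> = - v $ Inl j" by (simp add: sum.delta)
  finally show ?thesis .
qed

lemma Bmat_Inr:
  "(Bmat y ybar r *v v) $ Inr m = (\<Sum>j\<in>UNIV. stoich y ybar $ m $ j * v $ Inl j)"
  unfolding matrix_vector_mult_def
  by (simp add: UNIV_Plus_UNIV[symmetric] sum.Plus Bmat_def del: UNIV_Plus_UNIV)


abbreviation SRm where "SRm y ybar r \<equiv> stoich y ybar ** rate_matrix y r"

lemma detB_nz: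
  assumes "det (SRm y ybar r) \<noteq> 0"
  shows "det (Bmat y ybar r) \<noteq> 0"
proof -
  let ?B = "Bmat y ybar r"
  have z: "v = 0" if "?B *v v = 0" for v
  proof -
    define x where "x = (\<chi> j. v $ Inl j)"
    define w where "w = (\<chi> m. v $ Inr m)"
    have x: "x = rate_matrix y r *v w"
    proof -
      have "x $ j = (rate_matrix y r *v w) $ j" for j
      proof -
        have "(?B *v v) $ Inl j = 0" using that by simp
        then show ?thesis using Bmat_Inl[of y ybar r v j]
          by (simp add: x_def w_def matrix_vector_mult_def)
      qed
      then show ?thesis by (simp add: vec_eq_iff)
    qed
    have "stoich y ybar *v x = 0"
    proof -
      have "(stoich y ybar *v x) $ m = 0" for m
      proof -
        have "(?B *v v) $ Inr m = 0" using that by simp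
        then show ?thesis using Bmat_Inr[of y ybar r v m]
          by (simp add: x_def matrix_vector_mult_def)
      qed
      then show ?thesis by (simp add: vec_eq_iff)
    qed
    then have "SRm y ybar r *v w = SRm y ybar r *v 0"
      by (simp add: x matrix_vector_mul_assoc)
    moreover have "inj ((*v) (SRm y ybar r))"
      using assms inj_matrix_vector_mult invertible_det_nz by blast
    ultimately have w0: "w = 0" by (meson injD)
    then have x0: "x = 0" using x by simp
    show "v = 0"
    proof (subst vec_eq_iff, intro allI)
      fix i show "v $ i = 0 $ i"
      proof (cases i)
        case (Inl j) then show ?thesis using x0 by (simp add: x_def vec_eq_iff)
      next
        case (Inr m) then show ?thesis using w0 by (simp add: w_def vec_eq_iff)
      qed
    qed
  qed
  have "inj ((*v) ?B)"
  proof (rule injI)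
    fix a b assume "?B *v a = ?B *v b"
    then have "?B *v (a - b) = 0" by (simp add: matrix_vector_mult_diff_distrib)
    then have "a - b = 0" by (rule z)
    then show "a = b" by simp
  qed
  then show ?thesis
    using det_nz_iff_inj[of "(*v) ?B"] matrix_vector_mul_linear[of ?B] by simp
qed

lemma zvec_sol:
  assumes "det (Bmat y ybar r) \<noteq> 0"
  shows "Bmat y ybar r *v zvec y ybar r \<alpha> = - axis \<alpha> 1"
proof -
  let ?B = "Bmat y ybar r"
  have "invertible ?B" using assms invertible_det_nz by blast
  then have "\<exists>A'. ?B ** A' = mat 1 \<and> A' ** ?B = mat 1" unfolding invertible_def .
  then have "?B ** matrix_inv ?B = mat 1 \<and> matrix_inv ?B ** ?B = mat 1"
    unfolding matrix_inv_def by (rule someI_ex)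
  then have "?B *v (matrix_inv ?B *v axis \<alpha> 1) = axis \<alpha> 1"
    by (simp add: matrix_vector_mul_assoc)
  moreover have "?B *v (- v) = - (?B *v v)" for v
    by (simp add: matrix_vector_mult_def vec_eq_iff sum_negf)
  ultimately show ?thesis
    unfolding zvec_def by simp
qed

lemma zvec_unique:
  assumes "det (Bmat y ybar r) \<noteq> 0" "Bmat y ybar r *v w = - axis \<alpha> 1"
  shows "zvec y ybar r \<alpha> = w"
  using zvec_sol[OF assms(1)] assms(2) inj_matrix_vector_mult[of "Bmat y ybar r"]
    assms(1) invertible_det_nz by (metis injD)

lemma zvec_cramer:
  assumes "det (Bmat y ybar r) \<noteq> 0"
  shows "zvec y ybar r \<alpha> $ \<beta> * det (Bmat y ybar r) =
     det (\<chi> i k. if k = \<beta> then (- axis \<alpha> 1) $ i else Bmat y ybar r $ i $ k)"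
  using cramer_lemma[where A="Bmat y ybar r" and k=\<beta> and x="zvec y ybar r \<alpha>"] 
  unfolding zvec_sol[OF assms] by (rule sym)

definition rl :: "('e \<Rightarrow> 'm \<Rightarrow> real) \<Rightarrow> ('e \<Rightarrow> 'm \<Rightarrow> real) \<Rightarrow> real \<Rightarrow> 'e \<Rightarrow> 'm \<Rightarrow> real" where
  "rl a b t = (\<lambda>j m. a j m + t * b j m)"

lemma PF_R: "PF (\<lambda>t. rate_matrix y (rl a b t) $ j $ m)"
  by (cases "y j m = 0") (simp_all add: rate_matrix_def rl_def PF_const PF_add PF_mult PF_id)

lemma PF_B: "PF (\<lambda>t. Bmat y ybar (rl a b t) $ i $ k)"
  by (cases i; cases k) (simp_all add: Bmat_def PF_const PF_R)

lemma PF_detSR: "PF (\<lambda>t. det (SRm y ybar (rl a b t)))"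
  by (intro PF_det) (simp add: matrix_matrix_mult_def PF_sum PF_mult PF_const PF_R)

lemma PF_cram: "PF (\<lambda>t. det (\<chi> i k. if k = \<beta> then c $ i else Bmat y ybar (rl a b t) $ i $ k))"
proof (intro PF_det)
  fix i k show "PF (\<lambda>t. (\<chi> i k. if k = \<beta> then c $ i else Bmat y ybar (rl a b t) $ i $ k) $ i $ k)"
    by (cases "k = \<beta>") (simp_all add: PF_const PF_B)
qed

lemma PF_roots: assumes "PF f" "f t0 \<noteq> 0" shows "finite {t. f t = 0}"
proof -
  obtain p where p: "\<forall>t. f t = poly p t" using assms(1) unfolding PF_def by blast
  then have "p \<noteq> 0" using assms(2) by auto
  then show ?thesis using poly_roots_finite[of p] p by simp
qed

lemma generic:
  assumes "det (SRm y ybar r0) \<noteq> 0" "zvec y ybar r0 \<alpha>1 $ \<beta>1 \<noteq> 0"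
    "det (SRm y ybar r1) \<noteq> 0" "zvec y ybar r1 \<alpha>2 $ \<beta>2 \<noteq> 0"
  shows "\<exists>r. det (SRm y ybar r) \<noteq> 0 \<and> zvec y ybar r \<alpha>1 $ \<beta>1 \<noteq> 0 \<and> zvec y ybar r \<alpha>2 $ \<beta>2 \<noteq> 0"
proof -
  define b where "b = (\<lambda>j m. r1 j m - r0 j m)"
  have hr0: "rl r0 b 0 = r0" and hr1: "rl r0 b 1 = r1" by (auto simp: rl_def b_def)
  define D where "D t = det (SRm y ybar (rl r0 b t))" for t
  define N1 where "N1 t = det (\<chi> i k. if k = \<beta>1 then (- axis \<alpha>1 1) $ i else Bmat y ybar (rl r0 b t) $ i $ k)" for t
  define N2 where "N2 t = det (\<chi> i k. if k = \<beta>2 then (- axis \<alpha>2 1) $ i else Bmat y ybar (rl r0 b t) $ i $ k)" for t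
  have fD: "finite {t. D t = 0}"
    by (rule PF_roots[of _ 0]) (use assms(1) hr0 PF_detSR in \<open>auto simp: D_def\<close>)
  have "N1 0 \<noteq> 0"
    unfolding N1_def hr0 using zvec_cramer[OF detB_nz[OF assms(1)], of \<alpha>1 \<beta>1] assms(1,2) detB_nz[OF assms(1)]
    by (metis mult_eq_0_iff)
  then have f1: "finite {t. N1 t = 0}"
    by (intro PF_roots[of _ 0]) (auto simp: N1_def PF_cram)
  have "N2 1 \<noteq> 0"
    unfolding N2_def hr1 using zvec_cramer[OF detB_nz[OF assms(3)], of \<alpha>2 \<beta>2] assms(3,4) detB_nz[OF assms(3)]
    by (metis mult_eq_0_iff)
  then have f2: "finite {t. N2 t = 0}"
    by (intro PF_roots[of _ 1]) (auto simp: N2_def PF_cram)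
  obtain t where t: "t \<notin> {t. D t = 0} \<union> {t. N1 t = 0} \<union> {t. N2 t = 0}"
    using ex_new_if_finite[OF infinite_UNIV_char_0, of "{t. D t = 0} \<union> {t. N1 t = 0} \<union> {t. N2 t = 0}"]
      fD f1 f2 by auto
  let ?r = "rl r0 b t"
  have d: "det (SRm y ybar ?r) \<noteq> 0" using t by (simp add: D_def)
  have "zvec y ybar ?r \<alpha>1 $ \<beta>1 \<noteq> 0" "zvec y ybar ?r \<alpha>2 $ \<beta>2 \<noteq> 0"
    using zvec_cramer[OF detB_nz[OF d], of \<alpha>1 \<beta>1] zvec_cramer[OF detB_nz[OF d], of \<alpha>2 \<beta>2] t
    by (auto simp: N1_def N2_def)
  then show ?thesis using d by blast
qed

lemma avoid_zero:
  assumes "det (SRm y ybar r) \<noteq> 0"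
  shows "\<exists>s. s \<noteq> 0 \<and> det (SRm y ybar (rl r d s)) \<noteq> 0"
proof -
  have hr0: "rl r d 0 = r" by (auto simp: rl_def)
  have fD: "finite {t. det (SRm y ybar (rl r d t)) = 0}"
    by (rule PF_roots[of _ 0]) (use assms hr0 PF_detSR in auto)
  obtain t where "t \<notin> insert 0 {t. det (SRm y ybar (rl r d t)) = 0}"
    using ex_new_if_finite[OF infinite_UNIV_char_0] fD by (metis finite_insert)
  then show ?thesis by auto
qed



definition dd :: "'e \<Rightarrow> 'm \<Rightarrow> 'e \<Rightarrow> 'm \<Rightarrow> real" where
  "dd ja ma = (\<lambda>j m. if j = ja \<and> m = ma then 1 else 0)"

lemma B_pert:
  assumes "y ja ma \<noteq> 0"
  shows "Bmat y ybar (rl r (dd ja ma) s) *v v = Bmat y ybar r *v v + (s * v $ Inr ma) *s axis (Inl ja) 1"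
proof (subst vec_eq_iff, intro allI)
  fix i
  show "(Bmat y ybar (rl r (dd ja ma) s) *v v) $ i = (Bmat y ybar r *v v + (s * v $ Inr ma) *s axis (Inl ja) 1) $ i"
  proof (cases i)
    case (Inl j)
    have R: "rate_matrix y (rl r (dd ja ma) s) $ j $ m * v $ Inr m = rate_matrix y r $ j $ m * v $ Inr m + (if m = ma then (if j = ja then s * v $ Inr m else 0) else 0)" for m
      using assms by (auto simp: rate_matrix_def rl_def dd_def algebra_simps)
    have "(\<Sum>m\<in>UNIV. rate_matrix y (rl r (dd ja ma) s) $ j $ m * v $ Inr m) = (\<Sum>m\<in>UNIV. rate_matrix y r $ j $ m * v $ Inr m) + (\<Sum>m\<in>UNIV. (if m = ma then (if j = ja then s * v $ Inr m else 0) else 0))"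
      unfolding R by (simp add: sum.distrib)
    also have "(\<Sum>m\<in>UNIV. (if m = ma then (if j = ja then s * v $ Inr m else 0) else 0)) = (if j = ja then s * v $ Inr ma else 0)"
      by (simp add: sum.delta)
    finally show ?thesis using Inl by (simp add: Bmat_Inl axis_def)
  next
    case (Inr m)
    then show ?thesis by (simp add: Bmat_Inr axis_def)
  qed
qed

lemma pert_z:
  fixes r :: "'e::finite \<Rightarrow> 'm::finite \<Rightarrow> real"
  assumes U: "det (SRm y ybar r) \<noteq> 0" and Us: "det (SRm y ybar (rl r (dd ja ma) s)) \<noteq> 0"
    and y: "y ja ma \<noteq> 0"
  shows "1 - s * zvec y ybar r (Inl ja) $ Inr ma \<noteq> 0 \<and>
    zvec y ybar (rl r (dd ja ma) s) (Inl jb) = zvec y ybar r (Inl jb) +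
      (s * zvec y ybar r (Inl jb) $ Inr ma / (1 - s * zvec y ybar r (Inl ja) $ Inr ma)) *s zvec y ybar r (Inl ja)"
proof -
  define z1 where "z1 = zvec y ybar r (Inl jb)"
  define z2 where "z2 = zvec y ybar r (Inl ja)"
  let ?rs = "rl r (dd ja ma) s"
  let ?B = "Bmat y ybar r"
  let ?Bs = "Bmat y ybar ?rs"
  let ?e = "axis (Inl ja) 1 :: real^('e+'m)"
  have dB: "det ?B \<noteq> 0" using detB_nz[OF U] .
  have dBs: "det ?Bs \<noteq> 0" using detB_nz[OF Us] .
  have s1: "?B *v z1 = - axis (Inl jb) 1" unfolding z1_def by (rule zvec_sol[OF dB])
  have s2: "?B *v z2 = - ?e" unfolding z2_def by (rule zvec_sol[OF dB])
  have nz: "1 - s * z2 $ Inr ma \<noteq> 0"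
  proof
    assume h: "1 - s * z2 $ Inr ma = 0"
    then have h1: "s * z2 $ Inr ma = 1" by simp
    have "?Bs *v z2 = ?Bs *v 0"
      using B_pert[where y=y and ja=ja and ma=ma, OF y, of ybar r s z2] s2 h1 by simp
    moreover have "inj ((*v) ?Bs)"
      using dBs inj_matrix_vector_mult invertible_det_nz by blast
    ultimately have "z2 = 0" by (meson injD)
    then have "?B *v z2 = 0" by simp
    moreover have "?e $ Inl ja = 1" by (simp add: axis_def)
    ultimately show False using s2 by (metis neg_equal_0_iff_equal zero_index zero_neq_one)
  qed
  define c where "c = s * z1 $ Inr ma / (1 - s * z2 $ Inr ma)"
  define w where "w = z1 + c *s z2"
  have key: "s * (z1 $ Inr ma + c * z2 $ Inr ma) = c"
    using nz unfolding c_def by (simp add: field_simps)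
  have "?Bs *v w = ?B *v w + (s * w $ Inr ma) *s ?e" by (rule B_pert[where y=y and ja=ja and ma=ma, OF y])
  also have "?B *v w = - axis (Inl jb) 1 - c *s ?e"
    by (simp add: w_def matrix_vector_right_distrib vector_scalar_commute s1 s2 vector_smult_rneg)
  also have "s * w $ Inr ma = c" using key by (simp add: w_def)
  finally have "?Bs *v w = - axis (Inl jb) 1" by simp
  then have "zvec y ybar ?rs (Inl jb) = w" by (rule zvec_unique[OF dBs])
  then show ?thesis using nz by (simp add: w_def c_def z1_def z2_def)
qed

lemma transit_core:
  assumes ne: "j1 \<noteq> j2" and i1: "influences y ybar (Inl j1) (Inl j2)" and i2: "influences y ybar (Inl j2) \<beta>"
  shows "influences y ybar (Inl j1) \<beta>"
proof -
  obtain r0 where h1: "det (SRm y ybar r0) \<noteq> 0" and h2: "zvec y ybar r0 (Inl j1) $ Inl j2 \<noteq> 0"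
    using i1 unfolding influences_def by blast
  obtain r1 where h3: "det (SRm y ybar r1) \<noteq> 0" and h4: "zvec y ybar r1 (Inl j2) $ \<beta> \<noteq> 0"
    using i2 unfolding influences_def by blast
  obtain r where U: "det (SRm y ybar r) \<noteq> 0"
    and a: "zvec y ybar r (Inl j1) $ Inl j2 \<noteq> 0" and b: "zvec y ybar r (Inl j2) $ \<beta> \<noteq> 0"
    using generic[OF h1 h2 h3 h4] by blast
  define z1 where "z1 = zvec y ybar r (Inl j1)"
  define z2 where "z2 = zvec y ybar r (Inl j2)"
  have dB: "det (Bmat y ybar r) \<noteq> 0" using detB_nz[OF U] .
  have "(Bmat y ybar r *v z1) $ Inl j2 = 0"
    using zvec_sol[OF dB, of "Inl j1"] ne unfolding z1_def by (simp add: axis_def)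
  then have "z1 $ Inl j2 = (\<Sum>m\<in>UNIV. rate_matrix y r $ j2 $ m * z1 $ Inr m)"
    by (simp add: Bmat_Inl)
  then have "(\<Sum>m\<in>UNIV. rate_matrix y r $ j2 $ m * z1 $ Inr m) \<noteq> 0" using a z1_def by simp
  then obtain m0 where "rate_matrix y r $ j2 $ m0 * z1 $ Inr m0 \<noteq> 0"
    by (metis (mono_tags, lifting) sum.neutral)
  then have y: "y j2 m0 \<noteq> 0" and z1m: "z1 $ Inr m0 \<noteq> 0"
    by (auto simp: rate_matrix_def split: if_splits)
  show ?thesis
  proof (cases "z1 $ \<beta> = 0")
    case False
    then show ?thesis using U unfolding influences_def z1_def by blast
  next
    case True
    obtain s where s: "s \<noteq> 0" and Us: "det (SRm y ybar (rl r (dd j2 m0) s)) \<noteq> 0"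
      using avoid_zero[OF U] by blast
    note P = pert_z[where y=y and ja=j2 and ma=m0, OF U Us y, of j1, folded z1_def z2_def]
    then have "zvec y ybar (rl r (dd j2 m0) s) (Inl j1) $ \<beta> =
      (s * z1 $ Inr m0 / (1 - s * z2 $ Inr m0)) * z2 $ \<beta>"
      using True by simp
    also have "\<dots> \<noteq> 0" using P s z1m b z2_def by simp
    finally show ?thesis using Us unfolding influences_def by blast
  qed
qed

lemma transit:
  assumes "influences y ybar (Inl j1) (Inl j2)" "influences y ybar (Inl j2) \<beta>"
  shows "influences y ybar (Inl j1) \<beta>"
  using assms transit_core by (cases "j1 = j2") auto



lemma eqv_equivp: "equivp (rxn_equiv y ybar)"
proof (rule equivpI)
  show "reflp (rxn_equiv y ybar)" by (simp add: reflp_def rxn_equiv_def)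
  show "symp (rxn_equiv y ybar)" by (auto simp: symp_def rxn_equiv_def)
  show "transp (rxn_equiv y ybar)"
    unfolding transp_def rxn_equiv_def by (metis transit)
qed

lemma eqv_refl: "rxn_equiv y ybar a a" by (simp add: rxn_equiv_def)
lemma eqv_sym: "rxn_equiv y ybar a b \<Longrightarrow> rxn_equiv y ybar b a"
  by (auto simp: rxn_equiv_def)
lemma eqv_trans: "rxn_equiv y ybar a b \<Longrightarrow> rxn_equiv y ybar b c \<Longrightarrow> rxn_equiv y ybar a c"
  using eqv_equivp[of y ybar] by (meson equivp_transp)

lemma eqv_inf: "rxn_equiv y ybar a b \<Longrightarrow> a \<noteq> b \<Longrightarrow> influences y ybar (Inl a) (Inl b)"
  by (simp add: rxn_equiv_def)

lemma src_chain: "rxn_equiv y ybar a a' \<Longrightarrow> influences y ybar (Inl a') \<beta> \<Longrightarrow> influences y ybar (Inl a) \<beta>"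
  by (metis eqv_inf transit)

lemma tgt_chain: "influences y ybar (Inl a) (Inl b) \<Longrightarrow> rxn_equiv y ybar b b' \<Longrightarrow> influences y ybar (Inl a) (Inl b')"
  by (metis eqv_inf transit)

lemma mutual: "influences y ybar (Inl a) (Inl b) \<Longrightarrow> influences y ybar (Inl b) (Inl a) \<Longrightarrow> rxn_equiv y ybar a b"
  by (simp add: rxn_equiv_def)

lemma cls_ex: "\<phi> \<in> rxn_classes y ybar \<Longrightarrow> \<exists>x. \<phi> = rxn_class y ybar x"
  by (auto simp: rxn_classes_def quotient_def rxn_class_def)

lemma cls_same: "\<phi> \<in> rxn_classes y ybar \<Longrightarrow> u \<in> \<phi> \<Longrightarrow> v \<in> \<phi> \<Longrightarrow> rxn_equiv y ybar u v"
  by (metis cls_ex eqv_sym eqv_trans mem_Collect_eq rxn_class_def)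

lemma cls_eq: "\<phi>1 \<in> rxn_classes y ybar \<Longrightarrow> \<phi>2 \<in> rxn_classes y ybar \<Longrightarrow> u \<in> \<phi>1 \<Longrightarrow> v \<in> \<phi>2
   \<Longrightarrow> rxn_equiv y ybar u v \<Longrightarrow> \<phi>1 = \<phi>2"
proof -
  assume a: "\<phi>1 \<in> rxn_classes y ybar" "\<phi>2 \<in> rxn_classes y ybar" "u \<in> \<phi>1" "v \<in> \<phi>2" "rxn_equiv y ybar u v"
  obtain x1 where x1: "\<phi>1 = rxn_class y ybar x1" using cls_ex a(1) by blast
  obtain x2 where x2: "\<phi>2 = rxn_class y ybar x2" using cls_ex a(2) by blast
  have "rxn_equiv y ybar x1 x2"
    using a x1 x2 unfolding rxn_class_def by (metis eqv_sym eqv_trans mem_Collect_eq)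
  then show ?thesis unfolding x1 x2 rxn_class_def
    by (metis (mono_tags) Collect_cong eqv_sym eqv_trans)
qed

lemma self_cls: "j \<in> rxn_class y ybar j"
  by (simp add: rxn_class_def eqv_refl)

lemma cls_in: "rxn_class y ybar j \<in> rxn_classes y ybar"
  by (auto simp: rxn_classes_def quotient_def rxn_class_def)

lemma descent:
  assumes "j' \<notin> rxn_class y ybar js" "influences y ybar (Inl js) (Inl j')"
    "influences y ybar (Inl j') (Inr m')"
  shows "\<exists>j''. j'' \<notin> rxn_class y ybar js \<and> influences y ybar (Inl js) (Inl j'') \<and> m' \<in> M_d y ybar j''"
  using assms
proof (induction j' rule: measure_induct_rule[of "\<lambda>j. card (insert j {k. influences y ybar (Inl j) (Inl k)})"])
  case (less j')
  show ?case
  proof (cases "m' \<in> M_nd y ybar j'")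
    case False
    then have "m' \<in> M_d y ybar j'" using less.prems(3) by (simp add: M_d_def IM_def)
    then show ?thesis using less.prems by blast
  next
    case True
    then obtain k where k1: "k \<notin> rxn_class y ybar j'" and k2: "influences y ybar (Inl j') (Inl k)"
      and k3: "influences y ybar (Inl k) (Inr m')"
      unfolding M_nd_def by blast
    have ik: "influences y ybar (Inl js) (Inl k)" using transit less.prems(2) k2 by blast
    have nk: "k \<notin> rxn_class y ybar js"
    proof
      assume "k \<in> rxn_class y ybar js"
      then have "rxn_equiv y ybar k js" by (simp add: rxn_class_def eqv_sym)
      then have "influences y ybar (Inl j') (Inl js)" using tgt_chain k2 by blast
      then have "rxn_equiv y ybar js j'" using mutual less.prems(2) by blast
      then show False using less.prems(1) by (simp add: rxn_class_def)
    qed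
    have kj: "k \<noteq> j'" using k1 self_cls by metis
    have nkj: "\<not> influences y ybar (Inl k) (Inl j')"
      using mutual[OF k2] k1 by (auto simp: rxn_class_def)
    have "insert k {l. influences y ybar (Inl k) (Inl l)} \<subset> insert j' {l. influences y ybar (Inl j') (Inl l)}"
    proof
      show "insert k {l. influences y ybar (Inl k) (Inl l)} \<subseteq> insert j' {l. influences y ybar (Inl j') (Inl l)}"
        using k2 transit by blast
      have "j' \<in> insert j' {l. influences y ybar (Inl j') (Inl l)}" by simp
      moreover have "j' \<notin> insert k {l. influences y ybar (Inl k) (Inl l)}" using kj nkj by simp
      ultimately show "insert k {l. influences y ybar (Inl k) (Inl l)} \<noteq> insert j' {l. influences y ybar (Inl j') (Inl l)}"
        by blast
    qed
    then have "card (insert k {l. influences y ybar (Inl k) (Inl l)}) < card (insert j' {l. influences y ybar (Inl j') (Inl l)})"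
      by (simp add: psubset_card_mono)
    then show ?thesis using less.IH nk ik k3 by blast
  qed
qed

lemma part_e2:
  "influences y ybar (Inl js) (Inr m') \<longleftrightarrow>
          m' \<in> M_d y ybar js \<or>
          (\<exists>j'. j' \<notin> rxn_class y ybar js \<and> influences y ybar (Inl js) (Inl j') \<and> m' \<in> M_d y ybar j')"
proof
  assume h: "influences y ybar (Inl js) (Inr m')"
  show "m' \<in> M_d y ybar js \<or>
          (\<exists>j'. j' \<notin> rxn_class y ybar js \<and> influences y ybar (Inl js) (Inl j') \<and> m' \<in> M_d y ybar j')"
  proof (cases "m' \<in> M_nd y ybar js")
    case False then show ?thesis using h by (simp add: M_d_def IM_def)
  next
    case True
    then obtain j' where "j' \<notin> rxn_class y ybar js" "influences y ybar (Inl js) (Inl j')"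
      "influences y ybar (Inl j') (Inr m')" unfolding M_nd_def by blast
    then show ?thesis using descent by blast
  qed
next
  assume "m' \<in> M_d y ybar js \<or>
          (\<exists>j'. j' \<notin> rxn_class y ybar js \<and> influences y ybar (Inl js) (Inl j') \<and> m' \<in> M_d y ybar j')"
  then show "influences y ybar (Inl js) (Inr m')"
    by (auto simp: M_d_def IM_def intro: transit)
qed

theorem theorem2p7:
  fixes y ybar :: "'e::finite \<Rightarrow> 'm::finite \<Rightarrow> real"
  assumes nonneg_y: "\<And>j m. y j m \<ge> 0"
    and nonneg_ybar: "\<And>j m. ybar j m \<ge> 0"
    and full_rank: "rank (stoich y ybar) = CARD('m)"
    and reg: "regular y ybar"
  shows
    \<comment> \<open>(a)\<close>
    "equivp (rxn_equiv y ybar)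
     \<comment> \<open>(b)\<close>
     \<and> (\<forall>\<phi>\<in>rxn_classes y ybar. card \<phi> \<ge> 2 \<longrightarrow>
          (\<forall>j\<in>\<phi>. \<forall>j'\<in>\<phi>. influences y ybar (Inl j) (Inl j')))
     \<comment> \<open>(c)\<close>
     \<and> (\<forall>j1 j2. influences y ybar (Inl j1) (Inl j2) \<and> \<not> rxn_equiv y ybar j1 j2 \<longrightarrow>
          (\<forall>j1' j2'. rxn_equiv y ybar j1' j1 \<and> rxn_equiv y ybar j2' j2 \<longrightarrow>
             influences y ybar (Inl j1') (Inl j2') \<and> \<not> influences y ybar (Inl j2') (Inl j1')))
     \<and> (\<forall>\<phi>\<in>rxn_classes y ybar. \<not> class_prec y ybar \<phi> \<phi>)
     \<and> (\<forall>\<phi>1\<in>rxn_classes y ybar. \<forall>\<phi>2\<in>rxn_classes y ybar. \<forall>\<phi>3\<in>rxn_classes y ybar.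
          class_prec y ybar \<phi>1 \<phi>2 \<and> class_prec y ybar \<phi>2 \<phi>3 \<longrightarrow> class_prec y ybar \<phi>1 \<phi>3)
     \<and> (\<forall>js j'. j' \<noteq> js \<longrightarrow>
          (influences y ybar (Inl js) (Inl j') \<longleftrightarrow>
             j' \<in> rxn_class y ybar js \<or> class_prec y ybar (rxn_class y ybar js) (rxn_class y ybar j')))
     \<comment> \<open>(d)\<close>
     \<and> (\<forall>j1 j2. influences y ybar (Inl j1) (Inl j2) \<longrightarrow> IM y ybar j2 \<subseteq> IM y ybar j1)
     \<and> (\<forall>j1 j2. rxn_equiv y ybar j1 j2 \<longrightarrow> IM y ybar j1 = IM y ybar j2)
     \<comment> \<open>(e)\<close>
     \<and> (\<forall>js. M_nd y ybar js \<subseteq> IM y ybar js)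
     \<and> (\<forall>js m'. influences y ybar (Inl js) (Inr m') \<longleftrightarrow>
          m' \<in> M_d y ybar js \<or>
          (\<exists>j'. j' \<notin> rxn_class y ybar js \<and> influences y ybar (Inl js) (Inl j') \<and> m' \<in> M_d y ybar j'))
     \<and> (\<forall>js. IM y ybar js = M_d y ybar js \<union>
          (\<Union>j'\<in>{j'. influences y ybar (Inl js) (Inl j') \<and> j' \<notin> rxn_class y ybar js}. M_d y ybar j'))"
proof (intro conjI)
  show "equivp (rxn_equiv y ybar)" by (rule eqv_equivp)
next
  show "\<forall>\<phi>\<in>rxn_classes y ybar. card \<phi> \<ge> 2 \<longrightarrow>
          (\<forall>j\<in>\<phi>. \<forall>j'\<in>\<phi>. influences y ybar (Inl j) (Inl j'))"
  proof (intro ballI impI)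
    fix \<phi> j j' assume c: "\<phi> \<in> rxn_classes y ybar" "card \<phi> \<ge> 2" "j \<in> \<phi>" "j' \<in> \<phi>"
    show "influences y ybar (Inl j) (Inl j')"
    proof (cases "j = j'")
      case False then show ?thesis using cls_same[OF c(1,3,4)] eqv_inf by blast
    next
      case True
      have "\<exists>k\<in>\<phi>. k \<noteq> j"
      proof (rule ccontr)
        assume "\<not> (\<exists>k\<in>\<phi>. k \<noteq> j)"
        then have "\<phi> \<subseteq> {j}" by blast
        then have "card \<phi> \<le> 1" using card_mono[of "{j}" \<phi>] by simp
        then show False using c(2) by simp
      qed
      then obtain k where k: "k \<in> \<phi>" "k \<noteq> j" by blast
      have "influences y ybar (Inl j) (Inl k)" using cls_same[OF c(1,3) k(1)] k(2) eqv_inf by metis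
      moreover have "influences y ybar (Inl k) (Inl j)" using cls_same[OF c(1) k(1) c(3)] k(2) eqv_inf by metis
      ultimately show ?thesis using True transit by blast
    qed
  qed
next
  show "\<forall>j1 j2. influences y ybar (Inl j1) (Inl j2) \<and> \<not> rxn_equiv y ybar j1 j2 \<longrightarrow>
          (\<forall>j1' j2'. rxn_equiv y ybar j1' j1 \<and> rxn_equiv y ybar j2' j2 \<longrightarrow>
             influences y ybar (Inl j1') (Inl j2') \<and> \<not> influences y ybar (Inl j2') (Inl j1'))"
  proof (intro allI impI conjI)
    fix j1 j2 j1' j2'
    assume h: "influences y ybar (Inl j1) (Inl j2) \<and> \<not> rxn_equiv y ybar j1 j2"
      and e: "rxn_equiv y ybar j1' j1 \<and> rxn_equiv y ybar j2' j2"
    show "influences y ybar (Inl j1') (Inl j2')"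
      using h e src_chain tgt_chain eqv_sym by metis
    show "\<not> influences y ybar (Inl j2') (Inl j1')"
    proof
      assume "influences y ybar (Inl j2') (Inl j1')"
      then have "influences y ybar (Inl j2) (Inl j1)"
        using e src_chain tgt_chain eqv_sym by metis
      then show False using h mutual by blast
    qed
  qed
next
  show "\<forall>\<phi>\<in>rxn_classes y ybar. \<not> class_prec y ybar \<phi> \<phi>" by (simp add: class_prec_def)
next
  show "\<forall>\<phi>1\<in>rxn_classes y ybar. \<forall>\<phi>2\<in>rxn_classes y ybar. \<forall>\<phi>3\<in>rxn_classes y ybar.
          class_prec y ybar \<phi>1 \<phi>2 \<and> class_prec y ybar \<phi>2 \<phi>3 \<longrightarrow> class_prec y ybar \<phi>1 \<phi>3"
  proof (intro ballI impI)
    fix \<phi>1 \<phi>2 \<phi>3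
    assume c: "\<phi>1 \<in> rxn_classes y ybar" "\<phi>2 \<in> rxn_classes y ybar" "\<phi>3 \<in> rxn_classes y ybar"
      and p: "class_prec y ybar \<phi>1 \<phi>2 \<and> class_prec y ybar \<phi>2 \<phi>3"
    obtain a b where ab: "a \<in> \<phi>1" "b \<in> \<phi>2" "influences y ybar (Inl a) (Inl b)" "\<phi>1 \<noteq> \<phi>2"
      using p unfolding class_prec_def by blast
    obtain c d where cd: "c \<in> \<phi>2" "d \<in> \<phi>3" "influences y ybar (Inl c) (Inl d)"
      using p unfolding class_prec_def by blast
    have bc: "rxn_equiv y ybar b c" using cls_same[OF c(2) ab(2) cd(1)] .
    have ad: "influences y ybar (Inl a) (Inl d)"
      using tgt_chain[OF ab(3) bc] cd(3) transit by blast
    have "\<phi>1 \<noteq> \<phi>3"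
    proof
      assume eq: "\<phi>1 = \<phi>3"
      then have da: "rxn_equiv y ybar d a" using cls_same[OF c(1)] ab(1) cd(2) by blast
      have "influences y ybar (Inl b) (Inl a)"
        using src_chain[OF bc tgt_chain[OF cd(3) da]] .
      then have "rxn_equiv y ybar a b" using mutual ab(3) by blast
      then show False using cls_eq[OF c(1,2) ab(1,2)] ab(4) by blast
    qed
    then show "class_prec y ybar \<phi>1 \<phi>3" unfolding class_prec_def using ab(1) cd(2) ad by blast
  qed
next
  show "\<forall>js j'. j' \<noteq> js \<longrightarrow>
          (influences y ybar (Inl js) (Inl j') \<longleftrightarrow>
             j' \<in> rxn_class y ybar js \<or> class_prec y ybar (rxn_class y ybar js) (rxn_class y ybar j'))"
  proof (intro allI impI iffI)
    fix js j' assume ne: "j' \<noteq> js" and i: "influences y ybar (Inl js) (Inl j')"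
    show "j' \<in> rxn_class y ybar js \<or> class_prec y ybar (rxn_class y ybar js) (rxn_class y ybar j')"
    proof (cases "j' \<in> rxn_class y ybar js")
      case False
      then have "rxn_class y ybar js \<noteq> rxn_class y ybar j'" using self_cls by metis
      then show ?thesis unfolding class_prec_def using self_cls i by blast
    qed simp
  next
    fix js j' assume ne: "j' \<noteq> js"
      and h: "j' \<in> rxn_class y ybar js \<or> class_prec y ybar (rxn_class y ybar js) (rxn_class y ybar j')"
    show "influences y ybar (Inl js) (Inl j')"
      using h
    proof
      assume "j' \<in> rxn_class y ybar js"
      then show ?thesis using ne eqv_inf[of y ybar js j'] by (auto simp: rxn_class_def)
    next
      assume "class_prec y ybar (rxn_class y ybar js) (rxn_class y ybar j')"
      then obtain a b where "rxn_equiv y ybar js a" "rxn_equiv y ybar j' b" "influences y ybar (Inl a) (Inl b)"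
        unfolding class_prec_def rxn_class_def by blast
      then show ?thesis using src_chain tgt_chain eqv_sym by metis
    qed
  qed
next
  show "\<forall>j1 j2. influences y ybar (Inl j1) (Inl j2) \<longrightarrow> IM y ybar j2 \<subseteq> IM y ybar j1"
    by (auto simp: IM_def intro: transit)
next
  show "\<forall>j1 j2. rxn_equiv y ybar j1 j2 \<longrightarrow> IM y ybar j1 = IM y ybar j2"
    by (auto simp: IM_def intro: src_chain eqv_sym)
next
  show "\<forall>js. M_nd y ybar js \<subseteq> IM y ybar js"
    by (auto simp: IM_def M_nd_def intro: transit)
next
  show "\<forall>js m'. influences y ybar (Inl js) (Inr m') \<longleftrightarrow>
          m' \<in> M_d y ybar js \<or>
          (\<exists>j'. j' \<notin> rxn_class y ybar js \<and> influences y ybar (Inl js) (Inl j') \<and> m' \<in> M_d y ybar j')"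
    using part_e2 by blast
next
  show "\<forall>js. IM y ybar js = M_d y ybar js \<union>
          (\<Union>j'\<in>{j'. influences y ybar (Inl js) (Inl j') \<and> j' \<notin> rxn_class y ybar js}. M_d y ybar j')"
  proof
    fix js
    show "IM y ybar js = M_d y ybar js \<union>
          (\<Union>j'\<in>{j'. influences y ybar (Inl js) (Inl j') \<and> j' \<notin> rxn_class y ybar js}. M_d y ybar j')"
      using part_e2[of y ybar js] unfolding IM_def by blast
  qed
qed

end
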